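(* Let $X$ be a topological space and $\{X_\alpha\}_{\alpha\in I}$ a family of open subspaces of $X$, each of which is dense-connected. If $X_\alpha\cap X_\beta\neq\emptyset$ for any two distinct $\alpha,\beta\in I$, then $\bigcup_{\alpha\in I}X_\alpha$ is dense-connected.
   Context: A space $X$ is dense-connected if every dense subset of $X$ (with the subspace topology) is connected. *)

theory Defs
  imports "HOL-Analysis.Analysis"
begin

definition dense_connected :: "'a topology \<Rightarrow> bool" where
  "dense_connected X \<longleftrightarrow>
     (\<forall>D. D \<subseteq> topspace X \<and> X closure_of D = topspace X \<longrightarrow> connected_space (subtopology X D))"

end

theory Submission
  imports Defs
begin

theorem proposition4p13:
  fixes X :: "'a topology" and U :: "'i \<Rightarrow> 'a set" and I :: "'i set"
  assumes "\<And>\<alpha>. \<alpha> \<in> I \<Longrightarrow> openin X (U \<alpha>)"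
    and "\<And>\<alpha>. \<alpha> \<in> I \<Longrightarrow> dense_connected (subtopology X (U \<alpha>))"
    and "\<And>\<alpha> \<beta>. \<alpha> \<in> I \<Longrightarrow> \<beta> \<in> I \<Longrightarrow> \<alpha> \<noteq> \<beta> \<Longrightarrow> U \<alpha> \<inter> U \<beta> \<noteq> {}"
  shows "dense_connected (subtopology X (\<Union>\<alpha>\<in>I. U \<alpha>))"
  unfolding dense_connected_def
proof (intro allI impI, elim conjE)
  fix D
  define Y where "Y = (\<Union>\<alpha>\<in>I. U \<alpha>)"
  have YX: "Y \<subseteq> topspace X" using assms(1) openin_subset unfolding Y_def by blast
  have tY: "topspace (subtopology X Y) = Y" using YX by auto
  assume D1: "D \<subseteq> topspace (subtopology X (\<Union>\<alpha>\<in>I. U \<alpha>))"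
     and D2: "subtopology X (\<Union>\<alpha>\<in>I. U \<alpha>) closure_of D = topspace (subtopology X (\<Union>\<alpha>\<in>I. U \<alpha>))"
  have DY: "D \<subseteq> Y" using D1 tY Y_def by simp
  have meet: "D \<inter> T \<noteq> {}" if "openin X T" "T \<subseteq> Y" "T \<noteq> {}" for T
  proof -
    have "openin (subtopology X Y) T" using that by (metis inf.absorb_iff2 openin_subtopology_Int2)
    thus ?thesis using D2 that unfolding Y_def[symmetric] dense_intersects_open by blast
  qed
  have conn: "connectedin X (D \<inter> U \<alpha>)" if a: "\<alpha> \<in> I" for \<alpha>
  proof -
    have UX: "U \<alpha> \<subseteq> topspace X" using assms(1)[OF a] openin_subset by blast
    have "subtopology X (U \<alpha>) closure_of (D \<inter> U \<alpha>) = topspace (subtopology X (U \<alpha>))"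
      unfolding dense_intersects_open
    proof (intro allI impI, elim conjE)
      fix T assume T: "openin (subtopology X (U \<alpha>)) T" "T \<noteq> {}"
      have TX: "openin X T" using T(1) assms(1)[OF a] openin_trans_full by blast
      have TU: "T \<subseteq> U \<alpha>" using T(1) openin_subset by fastforce
      hence "T \<subseteq> Y" using a Y_def by blast
      thus "D \<inter> U \<alpha> \<inter> T \<noteq> {}" using meet[OF TX _ T(2)] TU by blast
    qed
    moreover have "D \<inter> U \<alpha> \<subseteq> topspace (subtopology X (U \<alpha>))" using UX by auto
    ultimately have "connected_space (subtopology (subtopology X (U \<alpha>)) (D \<inter> U \<alpha>))"
      using assms(2)[OF a] unfolding dense_connected_def by blast
    hence "connectedin (subtopology X (U \<alpha>)) (D \<inter> U \<alpha>)"
      using \<open>D \<inter> U \<alpha> \<subseteq> topspace (subtopology X (U \<alpha>))\<close> connectedin_def by blast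
    thus ?thesis by (simp add: connectedin_subtopology)
  qed
  have "connectedin X D"
  proof (cases "D = {}")
    case True thus ?thesis by simp
  next
    case False
    then obtain a where aD: "a \<in> D" by blast
    then obtain \<alpha>0 where a0: "\<alpha>0 \<in> I" "a \<in> U \<alpha>0" using DY Y_def by blast
    define C where "C \<beta> = (D \<inter> U \<alpha>0) \<union> (D \<inter> U \<beta>)" for \<beta>
    have Cc: "connectedin X (C \<beta>)" if b: "\<beta> \<in> I" for \<beta>
    proof (cases "\<beta> = \<alpha>0")
      case True thus ?thesis using conn[OF b] C_def by simp
    next
      case False
      have "U \<alpha>0 \<inter> U \<beta> \<noteq> {}" using assms(3)[OF a0(1) b] False by metis
      moreover have "openin X (U \<alpha>0 \<inter> U \<beta>)" using assms(1) a0(1) b by blast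
      moreover have "U \<alpha>0 \<inter> U \<beta> \<subseteq> Y" using a0(1) Y_def by blast
      ultimately have "D \<inter> (U \<alpha>0 \<inter> U \<beta>) \<noteq> {}" using meet by blast
      hence "\<Inter>{D \<inter> U \<alpha>0, D \<inter> U \<beta>} \<noteq> {}" by auto
      hence "connectedin X (\<Union>{D \<inter> U \<alpha>0, D \<inter> U \<beta>})"
        by (intro connectedin_Union) (use conn a0(1) b in auto)
      thus ?thesis by (simp add: C_def)
    qed
    have "D = \<Union>(C ` I)" using DY a0 unfolding C_def Y_def by blast
    moreover have "\<Inter>(C ` I) \<noteq> {}" using aD a0 C_def by blast
    ultimately show ?thesis using Cc connectedin_Union[of "C ` I" X] by auto
  qed
  thus "connected_space (subtopology (subtopology X (\<Union>\<alpha>\<in>I. U \<alpha>)) D)"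
    using DY Y_def by (simp add: connectedin_def subtopology_subtopology inf_absorb2)
qed

end
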